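(* For every $n\ge1$ and indices $i_1,\dots,i_n\in\{1,\dots,N\}$, setting $t=1$, $$\tilde\omega_{N,t=1}(\sigma_{i_1}\sigma_{i_2}\cdots\sigma_{i_n})=\omega_{N+1}(\sigma_{i_1}\sigma_{i_2}\cdots\sigma_{i_n}\sigma_{N+1}^n)+O(1/N)$$ as $N\to\infty$. Consequently, in the thermodynamic limit at $t=1$, the (quenched, replicated) Boltzmann average of a fillable multi-overlap monomial equals the Boltzmann average of the corresponding filled multi-overlap monomial.
   Context: Diluted two-body model: $\sigma\in\{-1,1\}^N$, $H_N(\sigma,\alpha)=-\sum_{\nu=1}^{P_{\alpha N}}\sigma_{i_\nu}\sigma_{j_\nu}$ with $P_{\alpha N}$ Poisson of mean $\alpha N$ and $\{i_\nu\},\{j_\nu\}$ i.i.d. uniform on $\{1,\dots,N\}$; $\omega_N$ is the Boltzmann state $\omega_N(g)=Z_N^{-1}\sum_\sigma g(\sigma)e^{-\beta H_N(\sigma,\alpha)}$, and $\omega_{N+1}$ is the same object for $N+1$ spins at connectivity $\alpha$. With $\tilde\alpha=\frac N{N+1}\alpha$, the $t$-dependent state is $$\tilde\omega_{N,t}(g)=\frac{1}{Z_{N,t}}\sum_\sigma g(\sigma)\exp\Big(\beta\sum_{\nu=1}^{P_{\tilde\alpha N}}\sigma_{i_\nu}\sigma_{j_\nu}+\beta\sum_{\nu=1}^{P'_{2\tilde\alpha t}}\sigma_{k_\nu}\Big),$$ $P'_{2\tilde\alpha t}$ Poisson of mean $2\tilde\alpha t$, $\{k_\nu\}$ i.i.d.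 uniform on $\{1,\dots,N\}$, independent of everything, $Z_{N,t}$ the normalization. Multi-overlaps of replicas $\sigma^{(1)},\sigma^{(2)},\dots$ (i.i.d. copies under the same quenched disorder) are $q_{a_1\cdots a_n}=\frac1N\sum_{i=1}^N\sigma_i^{(a_1)}\cdots\sigma_i^{(a_n)}$, with $m_a=q_a$. A monomial in the multi-overlaps is called filled (stochastically stable) if every replica index appears in it an even number of times (e.g. $q_{12}^2$, $m^2$, $q_{12}q_{34}q_{1234}$), and fillable otherwise (e.g. $q_{12}$, $m$, $q_{12}q_{34}$). *)

theory Defs
  imports Complex_Main
begin

text \<open>Spin configurations on sites 1..N (sites outside 1..N are frozen to 1 and irrelevant).\<close>
definition spins :: "nat \<Rightarrow> (nat \<Rightarrow> real) set" where
  "spins N = {\<sigma>. (\<forall>i\<in>{1..N}. \<sigma> i = -1 \<or> \<sigma> i = 1) \<and> (\<forall>i. i \<notin> {1..N} \<longrightarrow> \<sigma> i = 1)}"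

text \<open>Boltzmann weight exp(beta sum_nu sigma_{i_nu} sigma_{j_nu} + beta sum_nu sigma_{k_nu})
  for a realisation of the links es = [(i_nu,j_nu)] and one-body fields ks = [k_nu].\<close>
definition bweight :: "real \<Rightarrow> (nat \<times> nat) list \<Rightarrow> nat list \<Rightarrow> (nat \<Rightarrow> real) \<Rightarrow> real" where
  "bweight \<beta> es ks \<sigma> = exp (\<beta> * (\<Sum>(i,j)\<leftarrow>es. \<sigma> i * \<sigma> j) + \<beta> * (\<Sum>k\<leftarrow>ks. \<sigma> k))"

definition gibbs :: "nat \<Rightarrow> real \<Rightarrow> (nat \<times> nat) list \<Rightarrow> nat list \<Rightarrow> ((nat \<Rightarrow> real) \<Rightarrow> real) \<Rightarrow> real" where
  "gibbs N \<beta> es ks g =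
     (\<Sum>\<sigma>\<in>spins N. g \<sigma> * bweight \<beta> es ks \<sigma>) / (\<Sum>\<sigma>\<in>spins N. bweight \<beta> es ks \<sigma>)"

definition mono :: "nat list \<Rightarrow> (nat \<Rightarrow> real) \<Rightarrow> real" where
  "mono I \<sigma> = (\<Prod>i\<leftarrow>I. \<sigma> i)"

definition poi :: "real \<Rightarrow> nat \<Rightarrow> real" where
  "poi lam p = exp (- lam) * lam ^ p / fact p"

definition unif_avg :: "'a set \<Rightarrow> nat \<Rightarrow> ('a list \<Rightarrow> real) \<Rightarrow> real" where
  "unif_avg S p F = (\<Sum>xs\<in>{xs. set xs \<subseteq> S \<and> length xs = p}. F xs) / real (card S) ^ p"

definition qexp :: "nat \<Rightarrow> real \<Rightarrow> real \<Rightarrow> ((nat \<times> nat) list \<Rightarrow> nat list \<Rightarrow> real) \<Rightarrow> real" where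
  "qexp N lam mu F =
     (\<Sum>p. \<Sum>q. poi lam p * poi mu q *
        unif_avg ({1..N} \<times> {1..N}) p (\<lambda>es. unif_avg {1..N} q (\<lambda>ks. F es ks)))"

definition alpha_tilde :: "nat \<Rightarrow> real \<Rightarrow> real" where
  "alpha_tilde N \<alpha> = real N / real (N + 1) * \<alpha>"

end

theory Submission imports Defs "HOL-Analysis.Infinite_Sum" "HOL-Library.Multiset"
begin

abbreviation ls :: "'a set \<Rightarrow> nat \<Rightarrow> 'a list set" where
  "ls S p \<equiv> {xs. set xs \<subseteq> S \<and> length xs = p}"

lemma ls_Suc: "ls S (Suc p) = (\<lambda>(x,xs). x#xs) ` (S \<times> ls S p)"
  by (auto simp: length_Suc_conv image_iff)

lemma ls_0: "ls S 0 = {[]}" by auto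

lemma ls_0': "{xs. xs = [] \<and> set xs \<subseteq> S} = {[]}" by auto

lemma sum_ls_Suc:
  assumes "finite S"
  shows "(\<Sum>xs\<in>ls S (Suc p). f xs) = (\<Sum>x\<in>S. \<Sum>xs\<in>ls S p. f (x#xs))"
proof -
  have inj: "inj_on (\<lambda>(x,xs). x#xs) (S \<times> ls S p)" by (auto simp: inj_on_def)
  have "(\<Sum>xs\<in>ls S (Suc p). f xs) = (\<Sum>z\<in>S \<times> ls S p. f ((\<lambda>(x,xs). x#xs) z))"
    unfolding ls_Suc by (rule sum.reindex[OF inj, unfolded comp_def])
  also have "\<dots> = (\<Sum>(x,xs)\<in>S \<times> ls S p. f (x#xs))"
    by (rule sum.cong) auto
  also have "\<dots> = (\<Sum>x\<in>S. \<Sum>xs\<in>ls S p. f (x#xs))"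
    by (rule sum.cartesian_product[symmetric])
  finally show ?thesis .
qed

definition TT :: "'a set \<Rightarrow> 'a set \<Rightarrow> ('a list \<Rightarrow> real) \<Rightarrow> nat \<Rightarrow> nat \<Rightarrow> real" where
  "TT S1 S2 \<Phi> a b = (\<Sum>ys\<in>ls S1 a. \<Sum>zs\<in>ls S2 b. \<Phi> (ys @ zs))"

lemma TT_S1:
  assumes "finite S1"
  shows "(\<Sum>x\<in>S1. TT S1 S2 (\<lambda>l. \<Phi> (x#l)) a b) = TT S1 S2 \<Phi> (Suc a) b"
  unfolding TT_def by (subst sum_ls_Suc[OF assms]) simp

lemma TT_S2:
  assumes "finite S2" "finite S1" and inv: "\<And>xs ys. mset xs = mset ys \<Longrightarrow> \<Phi> xs = \<Phi> ys"
  shows "(\<Sum>x\<in>S2. TT S1 S2 (\<lambda>l. \<Phi> (x#l)) a b) = TT S1 S2 \<Phi> a (Suc b)"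
proof -
  have "TT S1 S2 \<Phi> a (Suc b) = (\<Sum>ys\<in>ls S1 a. \<Sum>x\<in>S2. \<Sum>zs\<in>ls S2 b. \<Phi> (ys @ x # zs))"
    unfolding TT_def by (subst sum_ls_Suc[OF assms(1)]) simp
  also have "\<dots> = (\<Sum>ys\<in>ls S1 a. \<Sum>x\<in>S2. \<Sum>zs\<in>ls S2 b. \<Phi> (x # ys @ zs))"
    by (intro sum.cong refl inv) simp
  also have "\<dots> = (\<Sum>x\<in>S2. \<Sum>ys\<in>ls S1 a. \<Sum>zs\<in>ls S2 b. \<Phi> (x # ys @ zs))"
    by (rule sum.swap)
  finally show ?thesis unfolding TT_def by simp
qed

lemma aux_div: "(c::real) > 0 \<Longrightarrow> f1 > 0 \<Longrightarrow> f2 > 0 \<Longrightarrow> X/(f1*f2) = c * (X/((c*f1)*f2))"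
  by (simp add: field_simps)

lemma aux_div2: "(c::real) > 0 \<Longrightarrow> f1 > 0 \<Longrightarrow> f2 > 0 \<Longrightarrow> X/(f1*f2) = c * (X/(f1*(c*f2)))"
  by (simp add: field_simps)

lemma split_ls:
  assumes "finite S1" "finite S2" "S1 \<inter> S2 = {}"
    and inv: "\<And>xs ys. mset xs = mset ys \<Longrightarrow> \<Phi> xs = \<Phi> ys"
  shows "(\<Sum>xs\<in>ls (S1 \<union> S2) p. \<Phi> xs) / fact p
        = (\<Sum>a\<le>p. TT S1 S2 \<Phi> a (p - a) / (fact a * fact (p - a)))"
  using inv
proof (induction p arbitrary: \<Phi>)
  case 0
  show ?case by (simp add: TT_def ls_0')
next
  case (Suc p)
  define U where "U = (\<lambda>a b. TT S1 S2 \<Phi> a b / (fact a * fact b))"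
  have fin: "finite (S1 \<union> S2)" using assms by simp
  have IH: "(\<Sum>xs\<in>ls (S1 \<union> S2) p. \<Phi> (x#xs)) = fact p * (\<Sum>a\<le>p. TT S1 S2 (\<lambda>l. \<Phi> (x#l)) a (p - a) / (fact a * fact (p - a)))" for x
  proof -
    have "(\<Sum>xs\<in>ls (S1 \<union> S2) p. \<Phi> (x#xs)) / fact p = (\<Sum>a\<le>p. TT S1 S2 (\<lambda>l. \<Phi> (x#l)) a (p - a) / (fact a * fact (p - a)))"
      by (rule Suc.IH) (rule Suc.prems, simp)
    then show ?thesis by (simp add: field_simps)
  qed
  have "(\<Sum>xs\<in>ls (S1 \<union> S2) (Suc p). \<Phi> xs) = (\<Sum>x\<in>S1 \<union> S2. \<Sum>xs\<in>ls (S1 \<union> S2) p. \<Phi> (x#xs))"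
    by (rule sum_ls_Suc[OF fin])
  also have "\<dots> = (\<Sum>x\<in>S1. \<Sum>xs\<in>ls (S1 \<union> S2) p. \<Phi> (x#xs)) + (\<Sum>x\<in>S2. \<Sum>xs\<in>ls (S1 \<union> S2) p. \<Phi> (x#xs))"
    by (rule sum.union_disjoint) (use assms(1-3) in auto)
  also have "(\<Sum>x\<in>S1. \<Sum>xs\<in>ls (S1 \<union> S2) p. \<Phi> (x#xs)) = fact p * (\<Sum>a\<le>p. TT S1 S2 \<Phi> (Suc a) (p - a) / (fact a * fact (p - a)))"
  proof -
    have "(\<Sum>x\<in>S1. \<Sum>xs\<in>ls (S1 \<union> S2) p. \<Phi> (x#xs)) = fact p * (\<Sum>x\<in>S1. \<Sum>a\<le>p. TT S1 S2 (\<lambda>l. \<Phi> (x#l)) a (p - a) / (fact a * fact (p - a)))"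
      by (simp only: IH sum_distrib_left)
    also have "\<dots> = fact p * (\<Sum>a\<le>p. \<Sum>x\<in>S1. TT S1 S2 (\<lambda>l. \<Phi> (x#l)) a (p - a) / (fact a * fact (p - a)))"
      by (subst sum.swap) (rule refl)
    also have "\<dots> = fact p * (\<Sum>a\<le>p. TT S1 S2 \<Phi> (Suc a) (p - a) / (fact a * fact (p - a)))"
      by (simp only: sum_divide_distrib[symmetric] TT_S1[OF assms(1)])
    finally show ?thesis .
  qed
  also have "(\<Sum>x\<in>S2. \<Sum>xs\<in>ls (S1 \<union> S2) p. \<Phi> (x#xs)) = fact p * (\<Sum>a\<le>p. TT S1 S2 \<Phi> a (Suc (p - a)) / (fact a * fact (p - a)))"
  proof -
    have "(\<Sum>x\<in>S2. \<Sum>xs\<in>ls (S1 \<union> S2) p. \<Phi> (x#xs)) = fact p * (\<Sum>x\<in>S2. \<Sum>a\<le>p. TT S1 S2 (\<lambda>l. \<Phi> (x#l)) a (p - a) / (fact a * fact (p - a)))"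
      by (simp only: IH sum_distrib_left)
    also have "\<dots> = fact p * (\<Sum>a\<le>p. \<Sum>x\<in>S2. TT S1 S2 (\<lambda>l. \<Phi> (x#l)) a (p - a) / (fact a * fact (p - a)))"
      by (subst sum.swap) (rule refl)
    also have "\<dots> = fact p * (\<Sum>a\<le>p. TT S1 S2 \<Phi> a (Suc (p - a)) / (fact a * fact (p - a)))"
    proof -
      have "(\<Sum>x\<in>S2. TT S1 S2 (\<lambda>l. \<Phi> (x # l)) a b) = TT S1 S2 \<Phi> a (Suc b)" for a b
        by (rule TT_S2[OF assms(2,1)]) (rule Suc.prems)
      then show ?thesis by (simp only: sum_divide_distrib[symmetric])
    qed
    finally show ?thesis .
  qed
  finally have eq: "(\<Sum>xs\<in>ls (S1 \<union> S2) (Suc p). \<Phi> xs) = fact p * ((\<Sum>a\<le>p. TT S1 S2 \<Phi> (Suc a) (p - a) / (fact a * fact (p - a)))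
     + (\<Sum>a\<le>p. TT S1 S2 \<Phi> a (Suc (p - a)) / (fact a * fact (p - a))))"
    by (simp add: algebra_simps)
  have e1: "(\<Sum>a\<le>p. TT S1 S2 \<Phi> (Suc a) (p - a) / (fact a * fact (p - a))) = (\<Sum>a\<le>Suc p. real a * U a (Suc p - a))"
  proof -
    have "TT S1 S2 \<Phi> (Suc a) (p - a) / (fact a * fact (p - a)) = real (Suc a) * U (Suc a) (Suc p - Suc a)" for a
      unfolding U_def fact_Suc using aux_div[of "real (Suc a)" "fact a" "fact (p - a)" "TT S1 S2 \<Phi> (Suc a) (p - a)"]
      by (simp del: of_nat_Suc)
    then show ?thesis by (subst sum.atMost_Suc_shift) simp
  qed
  have e2: "(\<Sum>a\<le>p. TT S1 S2 \<Phi> a (Suc (p - a)) / (fact a * fact (p - a))) = (\<Sum>a\<le>Suc p. real (Suc p - a) * U a (Suc p - a))"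
  proof -
    have "TT S1 S2 \<Phi> a (Suc (p - a)) / (fact a * fact (p - a)) = real (Suc p - a) * U a (Suc p - a)" if "a \<le> p" for a
      unfolding U_def using that Suc_diff_le[OF that] aux_div2[of "real (Suc (p - a))" "fact a" "fact (p - a)" "TT S1 S2 \<Phi> a (Suc (p - a))"]
      by (simp del: of_nat_Suc add: fact_Suc)
    then show ?thesis by (subst sum.atMost_Suc) simp
  qed
  have e3: "(\<Sum>a\<le>Suc p. real a * U a (Suc p - a)) + (\<Sum>a\<le>Suc p. real (Suc p - a) * U a (Suc p - a))
       = (\<Sum>a\<le>Suc p. real (Suc p) * U a (Suc p - a))"
    by (subst sum.distrib[symmetric]) (auto intro!: sum.cong simp: algebra_simps of_nat_diff)
  show ?case
  proof -
    have r: "(\<Sum>a\<le>Suc p. TT S1 S2 \<Phi> a (Suc p - a) / (fact a * fact (Suc p - a))) = (\<Sum>a\<le>Suc p. U a (Suc p - a))"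
      by (simp add: U_def)
    have "(\<Sum>xs\<in>ls (S1 \<union> S2) (Suc p). \<Phi> xs) = fact (Suc p) * (\<Sum>a\<le>Suc p. U a (Suc p - a))"
      unfolding eq e1 e2 e3 sum_distrib_left[symmetric] fact_Suc by (simp only: mult_ac)
    then show ?thesis unfolding r by simp
  qed
qed

lemma term_alg:
  fixes n1 n2 L T :: real
  assumes "n1 > 0" "n2 > 0" "a + b = p"
  shows "exp (-(L*(n1/(n1+n2)))) * (L*(n1/(n1+n2)))^a / fact a * (exp (-(L*(n2/(n1+n2)))) * (L*(n2/(n1+n2)))^b / fact b)
          * (T / (n1^a * n2^b)) = exp (-L) * L^p / (n1+n2)^p * (T / (fact a * fact b))"
proof -
  have e: "exp (-(L*(n1/(n1+n2)))) * exp (-(L*(n2/(n1+n2)))) = exp (-L)"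
  proof -
    have s1: "n1/(n1+n2) + n2/(n1+n2) = 1" using assms by (simp add: add_divide_distrib[symmetric])
    have "exp (-(L*(n1/(n1+n2)))) * exp (-(L*(n2/(n1+n2)))) = exp (-(L*(n1/(n1+n2) + n2/(n1+n2))))"
      by (simp add: exp_add[symmetric] distrib_left)
    then show ?thesis unfolding s1 by simp
  qed
  have "(L*(n1/(n1+n2)))^a * (L*(n2/(n1+n2)))^b = L^p * n1^a * n2^b / (n1+n2)^p"
    using assms(3)[symmetric] by (simp add: power_mult_distrib power_divide power_add field_simps)
  then show ?thesis using assms e
    by (simp add: field_simps)
qed

lemma avg_avg_TT:
  "unif_avg S1 a (\<lambda>ys. unif_avg S2 b (\<lambda>zs. \<Phi> (ys @ zs))) = TT S1 S2 \<Phi> a b / (real (card S1) ^ a * real (card S2) ^ b)"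
  unfolding unif_avg_def TT_def by (simp add: sum_divide_distrib field_simps)

lemma thin_p:
  assumes "finite S1" "finite S2" "S1 \<inter> S2 = {}" "S1 \<noteq> {}" "S2 \<noteq> {}"
    and inv: "\<And>xs ys. mset xs = mset ys \<Longrightarrow> \<Phi> xs = \<Phi> ys"
  shows "poi L p * unif_avg (S1 \<union> S2) p \<Phi> =
    (\<Sum>a\<le>p. poi (L * (real (card S1) / real (card (S1 \<union> S2)))) a * poi (L * (real (card S2) / real (card (S1 \<union> S2)))) (p - a)
        * unif_avg S1 a (\<lambda>ys. unif_avg S2 (p - a) (\<lambda>zs. \<Phi> (ys @ zs))))"
proof -
  define n1 where "n1 = real (card S1)"
  define n2 where "n2 = real (card S2)"
  have n1: "n1 > 0" using assms by (simp add: n1_def card_gt_0_iff)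
  have n2: "n2 > 0" using assms by (simp add: n2_def card_gt_0_iff)
  have cu: "real (card (S1 \<union> S2)) = n1 + n2"
    using assms(1-3) by (simp add: card_Un_disjoint n1_def n2_def)
  have "(\<Sum>a\<le>p. poi (L * (n1 / (n1+n2))) a * poi (L * (n2 / (n1+n2))) (p - a)
        * unif_avg S1 a (\<lambda>ys. unif_avg S2 (p - a) (\<lambda>zs. \<Phi> (ys @ zs))))
      = (\<Sum>a\<le>p. exp (-L) * L^p / (n1+n2)^p * (TT S1 S2 \<Phi> a (p - a) / (fact a * fact (p - a))))"
    unfolding avg_avg_TT poi_def n1_def[symmetric] n2_def[symmetric]
    by (intro sum.cong refl term_alg n1 n2) simp
  also have "\<dots> = exp (-L) * L^p / (n1+n2)^p * ((\<Sum>xs\<in>ls (S1 \<union> S2) p. \<Phi> xs) / fact p)"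
    by (simp add: split_ls[OF assms(1-3) inv] sum_distrib_left)
  also have "\<dots> = poi L p * unif_avg (S1 \<union> S2) p \<Phi>"
    unfolding poi_def unif_avg_def cu by simp
  finally show ?thesis unfolding cu by (simp add: n1_def n2_def)
qed

lemma suminf_of_summable_on:
  fixes f :: "nat \<Rightarrow> real"
  assumes "(f has_sum X) UNIV"
  shows "f sums X"
  using assms by (rule has_sum_imp_sums)

lemma diag:
  fixes c :: "nat \<Rightarrow> nat \<Rightarrow> real" and u v :: "nat \<Rightarrow> real"
  assumes su: "summable u" and sv: "summable v" and u0: "\<And>a. u a \<ge> 0" and v0: "\<And>b. v b \<ge> 0"
    and bd: "\<And>a b. \<bar>c a b\<bar> \<le> u a * v b"
  shows "(\<Sum>p. \<Sum>a\<le>p. c a (p - a)) = (\<Sum>a. \<Sum>b. c a b)"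
proof -
  have hv: "(v has_sum suminf v) UNIV" by (rule sums_nonneg_imp_has_sum[OF summable_sums[OF sv] v0])
  have hu: "(u has_sum suminf u) UNIV" by (rule sums_nonneg_imp_has_sum[OF summable_sums[OF su] u0])
  have hrow: "((\<lambda>b. u a * v b) has_sum (u a * suminf v)) UNIV" for a
    by (rule has_sum_cmult_right[OF hv])
  have hcol: "(\<lambda>a. u a * suminf v) summable_on UNIV"
    by (rule has_sum_imp_summable[OF has_sum_cmult_left[OF hu]])
  have gs: "(\<lambda>(a,b). u a * v b) summable_on (UNIV \<times> UNIV)"
    by (rule summable_on_SigmaI[where g="\<lambda>a. u a * suminf v", OF _ hcol]) (simp_all add: hrow u0 v0)
  have cs: "(\<lambda>(a,b). c a b) summable_on (UNIV \<times> (UNIV::nat set))"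
  proof -
    have g1: "(\<lambda>(a,b). u a * v b) abs_summable_on (UNIV \<times> (UNIV::nat set))"
      by (rule summable_on_iff_abs_summable_on_real[THEN iffD1, OF gs])
    have "(\<lambda>(a,b). c a b) abs_summable_on (UNIV \<times> UNIV)"
      by (rule abs_summable_on_comparison_test[OF g1]) (clarsimp, use bd u0 v0 in \<open>simp add: abs_mult\<close>)
    then show ?thesis by (rule summable_on_iff_abs_summable_on_real[THEN iffD2])
  qed
  then obtain X where hX: "((\<lambda>(a,b). c a b) has_sum X) (UNIV \<times> UNIV)"
    using has_sum_infsum by blast
  have rows: "((\<lambda>b. c a b) has_sum (\<Sum>b. c a b)) UNIV" for a
  proof -
    have "(\<lambda>b. u a * v b) summable_on UNIV" by (rule has_sum_imp_summable[OF hrow])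
    then have "(\<lambda>b. u a * v b) abs_summable_on UNIV" by (rule summable_on_iff_abs_summable_on_real[THEN iffD1])
    then have "(\<lambda>b. c a b) abs_summable_on UNIV"
      by (rule abs_summable_on_comparison_test) (use bd u0 v0 in \<open>simp add: abs_mult\<close>)
    then have "(\<lambda>b. c a b) summable_on UNIV" by (rule summable_on_iff_abs_summable_on_real[THEN iffD2])
    then have "((\<lambda>b. c a b) has_sum infsum (\<lambda>b. c a b) UNIV) UNIV" by (rule has_sum_infsum)
    moreover from this have "infsum (\<lambda>b. c a b) UNIV = (\<Sum>b. c a b)"
      by (rule sums_unique[OF has_sum_imp_sums])
    ultimately show ?thesis by simp
  qed
  have "((\<lambda>a. \<Sum>b. c a b) has_sum X) UNIV"
    by (rule has_sum_Sigma'[where f="\<lambda>(a,b). c a b", OF hX]) (simp add: rows)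
  then have R: "(\<Sum>a. \<Sum>b. c a b) = X" by (rule sums_unique[OF has_sum_imp_sums, symmetric])
  have bij: "bij_betw (\<lambda>(p::nat,a::nat). (a, p - a)) (SIGMA p:UNIV. {..p}) (UNIV \<times> UNIV)"
  proof (rule bij_betw_byWitness[where f'="\<lambda>(a::nat,b::nat). (a+b, a)"])
    show "\<forall>x\<in>(SIGMA p:UNIV. {..p}). (\<lambda>(a::nat,b::nat). (a+b, a)) ((\<lambda>(p,a). (a, p - a)) x) = x" by auto
    show "\<forall>y\<in>UNIV \<times> UNIV. (\<lambda>(p,a). (a, p - a)) ((\<lambda>(a::nat,b::nat). (a+b, a)) y) = y" by auto
  qed auto
  have hL: "((\<lambda>(p,a). c a (p - a)) has_sum X) (SIGMA p:UNIV. {..p})"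
    using has_sum_reindex_bij_betw[OF bij, of "\<lambda>(a,b). c a b" X] hX by (simp add: split_def)
  have "((\<lambda>p. \<Sum>a\<le>p. c a (p - a)) has_sum X) UNIV"
    by (rule has_sum_Sigma'[where f="\<lambda>(p,a). c a (p - a)", OF hL]) simp
  then have L: "(\<Sum>p. \<Sum>a\<le>p. c a (p - a)) = X" by (rule sums_unique[OF has_sum_imp_sums, symmetric])
  show ?thesis using L R by simp
qed


lemma poi_nonneg: "L \<ge> 0 \<Longrightarrow> poi L p \<ge> 0"
  unfolding poi_def by simp

lemma poi_sums: "poi L sums 1"
proof -
  have "(\<lambda>n. L^n /\<^sub>R fact n) sums exp L" by (rule exp_converges)
  then have "(\<lambda>n. L^n / fact n) sums exp L" by (simp add: divide_inverse_commute scaleR_conv_of_real)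
  then have "(\<lambda>n. exp (-L) * (L^n / fact n)) sums (exp (-L) * exp L)" by (rule sums_mult)
  then show ?thesis unfolding poi_def by (simp add: exp_minus field_simps)
qed

lemma poi_summable: "summable (poi L)" using poi_sums by (rule sums_summable)

lemma poi_suminf: "(\<Sum>p. poi L p) = 1" using poi_sums by (rule sums_unique[symmetric])

lemma avg_bound:
  assumes "finite S" "\<And>xs. xs \<in> ls S p \<Longrightarrow> \<bar>F xs\<bar> \<le> B" "B \<ge> 0"
  shows "\<bar>unif_avg S p F\<bar> \<le> B"
proof (cases "card S = 0 \<and> p > 0")
  case True
  then show ?thesis using assms(3) by (simp add: unif_avg_def power_0_left)
next
  case False
  then have pos: "real (card S) ^ p > 0" by auto
  have s: "\<bar>sum F (ls S p)\<bar> \<le> (\<Sum>xs\<in>ls S p. B)"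
    by (rule order_trans[OF sum_abs sum_mono], rule assms(2))
  have c: "(\<Sum>xs\<in>ls S p. B) = real (card S) ^ p * B"
    using card_lists_length_eq[OF assms(1)] by simp
  have "\<bar>unif_avg S p F\<bar> = \<bar>sum F (ls S p)\<bar> / real (card S) ^ p"
    using pos by (simp add: unif_avg_def abs_divide)
  also have "\<dots> \<le> real (card S) ^ p * B / real (card S) ^ p"
    by (rule divide_right_mono[OF s[unfolded c]]) (use pos in simp)
  also have "\<dots> = B" using pos by simp
  finally show ?thesis .
qed

lemma thin:
  assumes "finite S1" "finite S2" "S1 \<inter> S2 = {}" "S1 \<noteq> {}" "S2 \<noteq> {}"
    and inv: "\<And>xs ys. mset xs = mset ys \<Longrightarrow> \<Phi> xs = \<Phi> ys"
    and bd: "\<And>xs. \<bar>\<Phi> xs\<bar> \<le> B" and L0: "L \<ge> 0"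
  shows "(\<Sum>p. poi L p * unif_avg (S1 \<union> S2) p \<Phi>) =
    (\<Sum>a. \<Sum>b. poi (L * (real (card S1) / real (card (S1 \<union> S2)))) a * poi (L * (real (card S2) / real (card (S1 \<union> S2)))) b
        * unif_avg S1 a (\<lambda>ys. unif_avg S2 b (\<lambda>zs. \<Phi> (ys @ zs))))"
proof -
  define L1 where "L1 = L * (real (card S1) / real (card (S1 \<union> S2)))"
  define L2 where "L2 = L * (real (card S2) / real (card (S1 \<union> S2)))"
  have L1: "L1 \<ge> 0" and L2: "L2 \<ge> 0" using L0 by (simp_all add: L1_def L2_def)
  have B0: "B \<ge> 0" using bd[of "[]"] by simp
  define c where "c = (\<lambda>a b. poi L1 a * poi L2 b * unif_avg S1 a (\<lambda>ys. unif_avg S2 b (\<lambda>zs. \<Phi> (ys @ zs))))"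
  have "(\<Sum>p. poi L p * unif_avg (S1 \<union> S2) p \<Phi>) = (\<Sum>p. \<Sum>a\<le>p. c a (p - a))"
    unfolding c_def L1_def L2_def by (subst thin_p[OF assms(1-5) inv]) simp_all
  also have "\<dots> = (\<Sum>a. \<Sum>b. c a b)"
  proof (rule diag[where u="\<lambda>a. B * poi L1 a" and v="poi L2"])
    show "summable (\<lambda>a. B * poi L1 a)" by (intro summable_mult poi_summable)
    show "summable (poi L2)" by (rule poi_summable)
    show "0 \<le> B * poi L1 a" for a using B0 poi_nonneg[OF L1] by simp
    show "0 \<le> poi L2 b" for b using poi_nonneg[OF L2] by simp
    show "\<bar>c a b\<bar> \<le> B * poi L1 a * poi L2 b" for a b
    proof -
      have h: "\<bar>unif_avg S1 a (\<lambda>ys. unif_avg S2 b (\<lambda>zs. \<Phi> (ys @ zs)))\<bar> \<le> B"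
        by (intro avg_bound assms B0 bd)
      have p0: "0 \<le> poi L1 a * poi L2 b" by (intro mult_nonneg_nonneg poi_nonneg L1 L2)
      have "\<bar>c a b\<bar> = poi L1 a * poi L2 b * \<bar>unif_avg S1 a (\<lambda>ys. unif_avg S2 b (\<lambda>zs. \<Phi> (ys @ zs)))\<bar>"
        unfolding c_def using poi_nonneg[OF L1, of a] poi_nonneg[OF L2, of b] by (simp add: abs_mult)
      also have "\<dots> \<le> poi L1 a * poi L2 b * B" by (rule mult_left_mono[OF h p0])
      finally show ?thesis by (simp add: mult_ac)
    qed
  qed
  finally show ?thesis unfolding c_def L1_def L2_def .
qed


lemma fiber_sum:
  assumes "finite S" "finite T" "h ` S \<subseteq> T" "\<And>t. t \<in> T \<Longrightarrow> card {x\<in>S. h x = t} = m"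
  shows "(\<Sum>xs\<in>ls S p. F (map h xs)) = real m ^ p * (\<Sum>ts\<in>ls T p. F ts)"
proof (induction p arbitrary: F)
  case 0
  show ?case by (simp add: ls_0')
next
  case (Suc p)
  define G where "G = (\<lambda>t. \<Sum>ts\<in>ls T p. F (t # ts))"
  have "(\<Sum>xs\<in>ls S (Suc p). F (map h xs)) = (\<Sum>x\<in>S. \<Sum>xs\<in>ls S p. F (h x # map h xs))"
    by (subst sum_ls_Suc[OF assms(1)]) simp
  also have "\<dots> = (\<Sum>x\<in>S. real m ^ p * G (h x))"
    unfolding G_def using Suc.IH[of "\<lambda>l. F (h _ # l)"] by simp
  also have "\<dots> = real m ^ p * (\<Sum>x\<in>S. G (h x))" by (simp add: sum_distrib_left)
  also have "(\<Sum>x\<in>S. G (h x)) = (\<Sum>t\<in>T. \<Sum>x\<in>{x\<in>S. h x = t}. G (h x))"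
    by (rule sum.group[symmetric]) (use assms(1-3) in auto)
  also have "\<dots> = (\<Sum>t\<in>T. real m * G t)"
  proof (rule sum.cong[OF refl])
    fix t assume t: "t \<in> T"
    have "(\<Sum>x\<in>{x\<in>S. h x = t}. G (h x)) = (\<Sum>x\<in>{x\<in>S. h x = t}. G t)" by (rule sum.cong) auto
    also have "\<dots> = real m * G t" using assms(4)[OF t] by simp
    finally show "(\<Sum>x\<in>{x\<in>S. h x = t}. G (h x)) = real m * G t" .
  qed
  also have "real m ^ p * (\<Sum>t\<in>T. real m * G t) = real m ^ Suc p * (\<Sum>ts\<in>ls T (Suc p). F ts)"
    unfolding G_def by (subst sum_ls_Suc[OF assms(2)]) (simp add: sum_distrib_left[symmetric])
  finally show ?case .
qed

lemma fiber_card: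
  assumes "finite S" "finite T" "h ` S \<subseteq> T" "\<And>t. t \<in> T \<Longrightarrow> card {x\<in>S. h x = t} = m"
  shows "card S = m * card T"
proof -
  have "card S = (\<Sum>x\<in>S. 1)" by simp
  also have "\<dots> = (\<Sum>t\<in>T. \<Sum>x\<in>{x\<in>S. h x = t}. 1)"
    by (rule sum.group[symmetric]) (use assms(1-3) in auto)
  also have "\<dots> = (\<Sum>t\<in>T. m)" using assms(4) by simp
  finally show ?thesis by simp
qed

lemma fiber_avg:
  assumes "finite S" "finite T" "h ` S \<subseteq> T" "\<And>t. t \<in> T \<Longrightarrow> card {x\<in>S. h x = t} = m" "m > 0"
  shows "unif_avg S p (\<lambda>xs. F (map h xs)) = unif_avg T p F"
proof -
  have 1: "(\<Sum>xs\<in>ls S p. F (map h xs)) = real m ^ p * (\<Sum>ts\<in>ls T p. F ts)" by (rule fiber_sum[OF assms(1-4)])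
  have 2: "card S = m * card T" by (rule fiber_card[OF assms(1-4)])
  show ?thesis unfolding unif_avg_def 1 2 using assms(5) by (simp add: power_mult_distrib)
qed

lemma unif_avg_cong:
  assumes "\<And>xs. set xs \<subseteq> S \<Longrightarrow> length xs = p \<Longrightarrow> F xs = G xs"
  shows "unif_avg S p F = unif_avg S p G"
proof -
  have "sum F (ls S p) = sum G (ls S p)" by (rule sum.cong) (auto intro: assms)
  then show ?thesis unfolding unif_avg_def by simp
qed

lemma unif_avg_const:
  assumes "finite S" "S \<noteq> {}"
  shows "unif_avg S p (\<lambda>_. k) = k"
  unfolding unif_avg_def using assms by (simp add: card_lists_length_eq)

lemma unif_avg_0: "unif_avg S 0 F = F []"
  unfolding unif_avg_def ls_0 by simp

lemma summable_poi_bd: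
  assumes "L \<ge> 0" "\<And>m. \<bar>X m\<bar> \<le> B"
  shows "summable (\<lambda>m. poi L m * X m)"
proof (rule summable_comparison_test')
  show "summable (\<lambda>m. poi L m * B)" by (intro summable_mult2 poi_summable)
  show "norm (poi L m * X m) \<le> poi L m * B" for m
    using poi_nonneg[OF assms(1), of m] assms(2)[of m] by (simp add: abs_mult mult_left_mono)
qed

lemma avg_suminf:
  assumes "finite T" "\<And>ys. summable (\<lambda>m. w m * X ys m)"
  shows "(\<Sum>m. c * w m * unif_avg T a (\<lambda>ys. X ys m)) = c * unif_avg T a (\<lambda>ys. \<Sum>m. w m * X ys m)"
proof -
  have e: "(\<lambda>m. c * w m * unif_avg T a (\<lambda>ys. X ys m)) = (\<lambda>m. (c / real (card T) ^ a) * (\<Sum>ys\<in>ls T a. w m * X ys m))"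
    by (rule ext) (simp add: unif_avg_def sum_distrib_left[symmetric] mult_ac)
  have s: "summable (\<lambda>m. \<Sum>ys\<in>ls T a. w m * X ys m)"
    by (rule summable_sum) (rule assms(2))
  have "(\<Sum>m. c * w m * unif_avg T a (\<lambda>ys. X ys m)) = (c / real (card T) ^ a) * (\<Sum>m. \<Sum>ys\<in>ls T a. w m * X ys m)"
    unfolding e by (rule suminf_mult[OF s])
  also have "(\<Sum>m. \<Sum>ys\<in>ls T a. w m * X ys m) = (\<Sum>ys\<in>ls T a. \<Sum>m. w m * X ys m)"
    by (rule suminf_sum) (rule assms(2))
  finally show ?thesis by (simp add: unif_avg_def)
qed


lemma spins_pm: "\<sigma> \<in> spins N \<Longrightarrow> \<sigma> i = -1 \<or> \<sigma> i = 1"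
  unfolding spins_def by blast

lemma spins_abs: "\<sigma> \<in> spins N \<Longrightarrow> \<bar>\<sigma> i\<bar> = 1"
  using spins_pm[of \<sigma> N i] by auto

lemma spins_top: "\<sigma> \<in> spins N \<Longrightarrow> \<sigma> (N + 1) = 1"
  unfolding spins_def by auto

lemma spins_eq: "spins N = (\<lambda>S i. if i \<in> S then -1 else 1) ` Pow {1..N}"
proof
  show "spins N \<subseteq> (\<lambda>S i. if i \<in> S then -1 else 1) ` Pow {1..N}"
  proof
    fix \<sigma> assume s: "\<sigma> \<in> spins N"
    have "\<sigma> = (\<lambda>i. if i \<in> {i\<in>{1..N}. \<sigma> i = -1} then -1 else 1)"
    proof
      fix i show "\<sigma> i = (if i \<in> {i\<in>{1..N}. \<sigma> i = -1} then -1 else 1)"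
        using spins_pm[OF s, of i] s unfolding spins_def by (cases "i \<in> {1..N}") auto
    qed
    then show "\<sigma> \<in> (\<lambda>S i. if i \<in> S then -1 else 1) ` Pow {1..N}" by blast
  qed
  show "(\<lambda>S i. if i \<in> S then -1 else 1) ` Pow {1..N} \<subseteq> spins N"
    unfolding spins_def by (auto split: if_splits)
qed

lemma spins_finite: "finite (spins N)"
  unfolding spins_eq by simp

lemma spins_ne: "(\<lambda>_. 1) \<in> spins N"
  unfolding spins_def by simp

lemma bweight_pos: "bweight \<beta> es ks \<sigma> > 0"
  unfolding bweight_def by simp

lemma mono_abs: "\<sigma> \<in> spins N \<Longrightarrow> \<bar>mono I \<sigma>\<bar> = 1"
  unfolding mono_def by (induction I) (auto simp: abs_mult spins_abs)

lemma gibbs_bound: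
  assumes "\<And>\<sigma>. \<sigma> \<in> spins N \<Longrightarrow> \<bar>g \<sigma>\<bar> \<le> 1"
  shows "\<bar>gibbs N \<beta> es ks g\<bar> \<le> 1"
proof -
  let ?w = "bweight \<beta> es ks"
  have D: "(\<Sum>\<sigma>\<in>spins N. ?w \<sigma>) > 0"
    by (rule sum_pos2[OF spins_finite spins_ne]) (auto intro: less_imp_le bweight_pos)
  have "\<bar>\<Sum>\<sigma>\<in>spins N. g \<sigma> * ?w \<sigma>\<bar> \<le> (\<Sum>\<sigma>\<in>spins N. \<bar>g \<sigma> * ?w \<sigma>\<bar>)" by (rule sum_abs)
  also have "\<dots> \<le> (\<Sum>\<sigma>\<in>spins N. ?w \<sigma>)"
  proof (rule sum_mono)
    fix \<sigma> assume "\<sigma> \<in> spins N"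
    then have "\<bar>g \<sigma>\<bar> * ?w \<sigma> \<le> 1 * ?w \<sigma>"
      by (intro mult_right_mono assms) (auto intro: less_imp_le bweight_pos)
    then show "\<bar>g \<sigma> * ?w \<sigma>\<bar> \<le> ?w \<sigma>" using bweight_pos[of \<beta> es ks \<sigma>] by (simp add: abs_mult)
  qed
  finally show ?thesis using D unfolding gibbs_def by (simp add: abs_divide)
qed

lemma prod_bound: "(\<And>x. x \<in> set xs \<Longrightarrow> \<bar>f x\<bar> \<le> (1::real)) \<Longrightarrow> \<bar>\<Prod>x\<leftarrow>xs. f x\<bar> \<le> 1"
  by (induction xs) (auto simp: abs_mult intro: mult_le_one)

lemma gibbs_scale:
  assumes "c > 0" "\<And>\<sigma>. \<sigma> \<in> spins N \<Longrightarrow> bweight \<beta> es ks \<sigma> = c * bweight \<beta> es' ks' \<sigma>"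
  shows "gibbs N \<beta> es ks g = gibbs N \<beta> es' ks' g"
proof -
  have n: "(\<Sum>\<sigma>\<in>spins N. g \<sigma> * bweight \<beta> es ks \<sigma>) = c * (\<Sum>\<sigma>\<in>spins N. g \<sigma> * bweight \<beta> es' ks' \<sigma>)"
    by (simp add: sum_distrib_left assms(2) mult_ac cong: sum.cong)
  have d: "(\<Sum>\<sigma>\<in>spins N. bweight \<beta> es ks \<sigma>) = c * (\<Sum>\<sigma>\<in>spins N. bweight \<beta> es' ks' \<sigma>)"
    by (simp add: sum_distrib_left assms(2) cong: sum.cong)
  show ?thesis unfolding gibbs_def n d using assms(1) by simp
qed

lemma bweight_fields:
  assumes "\<sigma> (N + 1) = 1"
  shows "bweight \<beta> es ks \<sigma> = bweight \<beta> (es @ map (\<lambda>k. (k, N + 1)) ks) [] \<sigma>"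
  unfolding bweight_def using assms by (simp add: o_def algebra_simps)

lemma sum_list_mset_eq: "sum_list (map (f :: _ \<Rightarrow> real) xs) = sum_list (map f ys)" if "mset xs = mset ys"
proof -
  have "sum_list (map f xs) = sum_mset (mset (map f xs))" by (rule sum_mset_sum_list[symmetric])
  also have "\<dots> = sum_mset (mset (map f ys))" using that by (simp only: mset_map)
  also have "\<dots> = sum_list (map f ys)" by (rule sum_mset_sum_list)
  finally show ?thesis .
qed

lemma bweight_mset: "bweight \<beta> es ks \<sigma> = bweight \<beta> es' ks \<sigma>" if "mset es = mset es'"
proof -
  have "(\<Sum>(i,j)\<leftarrow>es. \<sigma> i * \<sigma> j) = (\<Sum>(i,j)\<leftarrow>es'. \<sigma> i * \<sigma> j)" by (rule sum_list_mset_eq[OF that])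
  then show ?thesis unfolding bweight_def by simp
qed

lemma sum_list_loops:
  assumes "set ws \<subseteq> {(N+1, N+1)}" "\<sigma> (N + 1) = 1"
  shows "(\<Sum>(i,j)\<leftarrow>ws. \<sigma> i * \<sigma> j) = real (length ws)"
  using assms(1) by (induction ws) (auto simp: assms(2))

lemma bweight_loops:
  assumes "set ws \<subseteq> {(N+1, N+1)}" "\<sigma> (N + 1) = 1"
  shows "bweight \<beta> (es @ ws) [] \<sigma> = exp (\<beta> * real (length ws)) * bweight \<beta> es [] \<sigma>"
  unfolding bweight_def using sum_list_loops[of ws N \<sigma>, OF assms] by (simp add: algebra_simps exp_add[symmetric])

lemma bweight_swap:
  assumes "\<And>i j. (i, j) \<in> set zs \<Longrightarrow> i = N + 1 \<or> j = N + 1" "\<sigma> (N + 1) = 1"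
  shows "bweight \<beta> (ys @ zs) [] \<sigma> = bweight \<beta> (ys @ map (\<lambda>k. (k, N + 1)) (map (\<lambda>(i,j). if i = N + 1 then j else i) zs)) [] \<sigma>"
proof -
  have "map (\<lambda>(i,j). \<sigma> i * \<sigma> j) zs = map (\<lambda>(i,j). \<sigma> i * \<sigma> j) (map (\<lambda>k. (k, N + 1)) (map (\<lambda>(i,j). if i = N + 1 then j else i) zs))"
    unfolding map_map
  proof (rule map_cong[OF refl])
    fix z assume "z \<in> set zs"
    moreover obtain i j where z1: "z = (i,j)" by (cases z)
    ultimately have z: "z = (i,j)" "(i,j) \<in> set zs" by auto
    show "(\<lambda>(i,j). \<sigma> i * \<sigma> j) z = ((\<lambda>(i,j). \<sigma> i * \<sigma> j) \<circ> ((\<lambda>k. (k, N + 1)) \<circ> (\<lambda>(i,j). if i = N + 1 then j else i))) z"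
      using assms(1)[OF z(2)] assms(2) z(1) by auto
  qed
  then have "sum_list (map (\<lambda>(i,j). \<sigma> i * \<sigma> j) (ys @ zs)) = sum_list (map (\<lambda>(i,j). \<sigma> i * \<sigma> j) (ys @ map (\<lambda>k. (k, N + 1)) (map (\<lambda>(i,j). if i = N + 1 then j else i) zs)))"
    by (simp only: map_append sum_list_append map_map)
  then show ?thesis unfolding bweight_def by (simp only:)
qed


definition flip :: "nat \<Rightarrow> (nat \<Rightarrow> real) \<Rightarrow> nat \<Rightarrow> real" where
  "flip M \<sigma> = (\<lambda>i. if i \<in> {1..M} then - \<sigma> i else \<sigma> i)"

lemma flip_flip: "flip M (flip M \<sigma>) = \<sigma>"
  unfolding flip_def by auto

lemma spins_out: "\<sigma> \<in> spins N \<Longrightarrow> i \<notin> {1..N} \<Longrightarrow> \<sigma> i = 1"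
  unfolding spins_def by blast

lemma flip_in:
  assumes s: "\<sigma> \<in> spins N"
  shows "flip (N + 1) \<sigma> \<in> spins (N + 1)"
  unfolding spins_def mem_Collect_eq
proof (intro conjI ballI allI impI)
  fix i :: nat assume "i \<in> {1..N + 1}"
  then show "flip (N + 1) \<sigma> i = -1 \<or> flip (N + 1) \<sigma> i = 1"
    using spins_pm[OF s, of i] unfolding flip_def by auto
next
  fix i :: nat assume i: "i \<notin> {1..N + 1}"
  then have "i \<notin> {1..N}" by auto
  then show "flip (N + 1) \<sigma> i = 1" using spins_out[OF s] i unfolding flip_def by simp
qed

lemma spins_sub:
  assumes s: "\<sigma> \<in> spins N"
  shows "\<sigma> \<in> spins (N + 1)"
  unfolding spins_def mem_Collect_eq
proof (intro conjI ballI allI impI)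
  fix i :: nat
  show "\<sigma> i = -1 \<or> \<sigma> i = 1" by (rule spins_pm[OF s])
next
  fix i :: nat assume i: "i \<notin> {1..N + 1}"
  then have "i \<notin> {1..N}" by auto
  then show "\<sigma> i = 1" by (rule spins_out[OF s])
qed

lemma spins_down:
  assumes s: "\<sigma> \<in> spins (N + 1)" and t: "\<sigma> (N + 1) = 1"
  shows "\<sigma> \<in> spins N"
  unfolding spins_def mem_Collect_eq
proof (intro conjI ballI allI impI)
  fix i :: nat
  show "\<sigma> i = -1 \<or> \<sigma> i = 1" by (rule spins_pm[OF s])
next
  fix i :: nat assume i: "i \<notin> {1..N}"
  show "\<sigma> i = 1"
  proof (cases "i = N + 1")
    case True then show ?thesis using t by simp
  next
    case False
    then have "i \<notin> {1..N + 1}" using i by auto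
    then show ?thesis by (rule spins_out[OF s])
  qed
qed

lemma spins_split: "spins (N + 1) = spins N \<union> flip (N + 1) ` spins N"
proof
  show "spins (N + 1) \<subseteq> spins N \<union> flip (N + 1) ` spins N"
  proof
    fix \<sigma> assume s: "\<sigma> \<in> spins (N + 1)"
    show "\<sigma> \<in> spins N \<union> flip (N + 1) ` spins N"
    proof (cases "\<sigma> (N + 1) = 1")
      case True
      then show ?thesis using spins_down[OF s] by simp
    next
      case False
      then have m: "\<sigma> (N + 1) = -1" using spins_pm[OF s, of "N+1"] by simp
      have "flip (N + 1) \<sigma> \<in> spins (N + 1)"
        using s unfolding spins_def flip_def by (auto simp del: One_nat_def)
      moreover have "flip (N + 1) \<sigma> (N + 1) = 1" using m unfolding flip_def by simp
      ultimately have "flip (N + 1) \<sigma> \<in> spins N" by (rule spins_down)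
      then have "flip (N + 1) (flip (N + 1) \<sigma>) \<in> flip (N + 1) ` spins N" by blast
      then show ?thesis by (simp add: flip_flip)
    qed
  qed
  show "spins N \<union> flip (N + 1) ` spins N \<subseteq> spins (N + 1)"
    using spins_sub flip_in by blast
qed

lemma mono_flip:
  assumes "set I \<subseteq> {1..M}"
  shows "mono I (flip M \<sigma>) = (-1) ^ length I * mono I \<sigma>"
  using assms unfolding mono_def flip_def by (induction I) auto

lemma bweight_flip:
  assumes "set es \<subseteq> {1..M} \<times> {1..M}"
  shows "bweight \<beta> es [] (flip M \<sigma>) = bweight \<beta> es [] \<sigma>"
proof -
  have "map (\<lambda>(i,j). flip M \<sigma> i * flip M \<sigma> j) es = map (\<lambda>(i,j). \<sigma> i * \<sigma> j) es"
  proof (rule map_cong[OF refl])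
    fix z assume z: "z \<in> set es"
    obtain i j where zz: "z = (i,j)" by (cases z)
    show "(\<lambda>(i,j). flip M \<sigma> i * flip M \<sigma> j) z = (\<lambda>(i,j). \<sigma> i * \<sigma> j) z"
      using assms z zz unfolding flip_def by auto
  qed
  then show ?thesis unfolding bweight_def by (simp only: list.map sum_list.Nil)
qed

lemma gauge:
  assumes es: "set es \<subseteq> {1..N+1} \<times> {1..N+1}" and I: "set I \<subseteq> {1..N}"
  shows "gibbs (N + 1) \<beta> es [] (\<lambda>\<sigma>. mono I \<sigma> * \<sigma> (N + 1) ^ length I) = gibbs N \<beta> es [] (mono I)"
proof -
  let ?w = "bweight \<beta> es []"
  let ?g = "\<lambda>\<sigma>. mono I \<sigma> * \<sigma> (N + 1) ^ length I"
  let ?F = "flip (N + 1)"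
  have I': "set I \<subseteq> {1..N+1}" using I by auto
  have inj: "inj_on ?F (spins N)" by (rule inj_on_inverseI[where g="?F"]) (rule flip_flip)
  have disj: "spins N \<inter> ?F ` spins N = {}"
  proof -
    have "\<sigma> (N + 1) = 1" if "\<sigma> \<in> spins N" for \<sigma> using spins_top[OF that] .
    moreover have "\<tau> (N + 1) = -1" if "\<tau> \<in> ?F ` spins N" for \<tau>
      using that spins_top unfolding flip_def by auto
    ultimately show ?thesis by fastforce
  qed
  have fin: "finite (?F ` spins N)" using spins_finite by simp
  have sumsplit: "(\<Sum>\<sigma>\<in>spins (N + 1). h \<sigma>) = (\<Sum>\<sigma>\<in>spins N. h \<sigma>) + (\<Sum>\<sigma>\<in>spins N. h (?F \<sigma>))" for h :: "_ \<Rightarrow> real"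
    unfolding spins_split sum.union_disjoint[OF spins_finite fin disj] sum.reindex[OF inj] by (simp add: o_def)
  have gN: "?g \<sigma> = mono I \<sigma>" if "\<sigma> \<in> spins N" for \<sigma> using spins_top[OF that] by simp
  have gF: "?g (?F \<sigma>) = mono I \<sigma>" if "\<sigma> \<in> spins N" for \<sigma>
  proof -
    have "?F \<sigma> (N + 1) = -1" using spins_top[OF that] unfolding flip_def by simp
    then show ?thesis using mono_flip[OF I'] by (simp add: power_mult_distrib[symmetric])
  qed
  have wF: "?w (?F \<sigma>) = ?w \<sigma>" for \<sigma> by (rule bweight_flip[OF es])
  have num: "(\<Sum>\<sigma>\<in>spins (N + 1). ?g \<sigma> * ?w \<sigma>) = 2 * (\<Sum>\<sigma>\<in>spins N. mono I \<sigma> * ?w \<sigma>)"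
  proof -
    have 1: "(\<Sum>\<sigma>\<in>spins N. ?g \<sigma> * ?w \<sigma>) = (\<Sum>\<sigma>\<in>spins N. mono I \<sigma> * ?w \<sigma>)"
      by (rule sum.cong[OF refl]) (use gN in auto)
    have 2: "(\<Sum>\<sigma>\<in>spins N. ?g (?F \<sigma>) * ?w (?F \<sigma>)) = (\<Sum>\<sigma>\<in>spins N. mono I \<sigma> * ?w \<sigma>)"
      by (rule sum.cong[OF refl]) (use gF wF in auto)
    show ?thesis unfolding sumsplit[of "\<lambda>\<sigma>. ?g \<sigma> * ?w \<sigma>"] 1 2 by simp
  qed
  have den: "(\<Sum>\<sigma>\<in>spins (N + 1). ?w \<sigma>) = 2 * (\<Sum>\<sigma>\<in>spins N. ?w \<sigma>)"
    unfolding sumsplit[of ?w] wF by simp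
  show ?thesis unfolding gibbs_def num den by simp
qed


definition PhiF :: "nat \<Rightarrow> real \<Rightarrow> nat list list \<Rightarrow> (nat \<times> nat) list \<Rightarrow> real" where
  "PhiF N \<beta> Is es = (\<Prod>I\<leftarrow>Is. gibbs N \<beta> es [] (mono I))"

lemma Phi_mset: "PhiF N \<beta> Is xs = PhiF N \<beta> Is ys" if "mset xs = mset ys"
proof -
  have "gibbs N \<beta> xs [] g = gibbs N \<beta> ys [] g" for g
    by (rule gibbs_scale[where c=1]) (simp_all add: bweight_mset[OF that])
  then show ?thesis unfolding PhiF_def by simp
qed

lemma Phi_bound: "\<bar>PhiF N \<beta> Is xs\<bar> \<le> 1"
  unfolding PhiF_def by (intro prod_bound gibbs_bound) (simp add: mono_abs)

lemma Phi_loops: "PhiF N \<beta> Is (xs @ ws) = PhiF N \<beta> Is xs" if "set ws \<subseteq> {(N+1, N+1)}"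
proof -
  have "gibbs N \<beta> (xs @ ws) [] g = gibbs N \<beta> xs [] g" for g
    by (rule gibbs_scale[where c="exp (\<beta> * real (length ws))"]) (simp_all add: bweight_loops[OF that spins_top])
  then show ?thesis unfolding PhiF_def by simp
qed

lemma Phi_swap:
  assumes "\<And>i j. (i, j) \<in> set zs \<Longrightarrow> i = N + 1 \<or> j = N + 1"
  shows "PhiF N \<beta> Is (ys @ zs) = PhiF N \<beta> Is (ys @ map (\<lambda>k. (k, N + 1)) (map (\<lambda>(i,j). if i = N + 1 then j else i) zs))"
proof -
  have "gibbs N \<beta> (ys @ zs) [] g = gibbs N \<beta> (ys @ map (\<lambda>k. (k, N + 1)) (map (\<lambda>(i,j). if i = N + 1 then j else i) zs)) [] g" for g
    by (rule gibbs_scale[where c=1]) (simp_all add: bweight_swap[OF assms spins_top])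
  then show ?thesis unfolding PhiF_def by simp
qed

lemma Phi_fields: "(\<Prod>I\<leftarrow>Is. gibbs N \<beta> es ks (mono I)) = PhiF N \<beta> Is (es @ map (\<lambda>k. (k, N + 1)) ks)"
proof -
  have "gibbs N \<beta> es ks g = gibbs N \<beta> (es @ map (\<lambda>k. (k, N + 1)) ks) [] g" for g
  proof (rule gibbs_scale[where c=1])
    fix \<sigma> assume "\<sigma> \<in> spins N"
    then show "bweight \<beta> es ks \<sigma> = 1 * bweight \<beta> (es @ map (\<lambda>k. (k, N + 1)) ks) [] \<sigma>"
      using bweight_fields[of \<sigma> N \<beta> es ks, OF spins_top[OF \<open>\<sigma> \<in> spins N\<close>]] by simp
  qed simp
  then show ?thesis unfolding PhiF_def by simp
qed

lemma Phi_gauge: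
  assumes "set es \<subseteq> {1..N+1} \<times> {1..N+1}" "\<forall>I\<in>set Is. set I \<subseteq> {1..N}"
  shows "(\<Prod>I\<leftarrow>Is. gibbs (N + 1) \<beta> es [] (\<lambda>\<sigma>. mono I \<sigma> * \<sigma> (N + 1) ^ length I)) = PhiF N \<beta> Is es"
  unfolding PhiF_def using assms(2)
  by (intro arg_cong[where f=prod_list] map_cong refl gauge[OF assms(1)]) auto


lemma rate1: fixes x a :: real assumes "x + 1 > 0"
  shows "a*(x+1)*(x*x/((x+1)*(x+1))) = x/(x+1)*a*x"
proof -
  have "a*(x+1)*(x*x/((x+1)*(x+1))) = a*x*x*((x+1)/((x+1)*(x+1)))" by (simp add: algebra_simps)
  also have "(x+1)/((x+1)*(x+1)) = 1/(x+1)" using assms by simp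
  finally show ?thesis by simp
qed
lemma rate2: fixes x a :: real assumes "x > 0"
  shows "a*(x+1)*((2*x+1)/((x+1)*(x+1))) * ((2*x)/(2*x+1)) = 2*(x/(x+1)*a)"
proof -
  have p: "(2*x+1) > 0" using assms by simp
  then have e: "((2*x+1)/((x+1)*(x+1))) * ((2*x)/(2*x+1)) = (2*x)/((x+1)*(x+1))" by simp
  have "a*(x+1)*((2*x+1)/((x+1)*(x+1))) * ((2*x)/(2*x+1)) = a*(x+1)*(((2*x+1)/((x+1)*(x+1))) * ((2*x)/(2*x+1)))"
    by (simp only: mult.assoc)
  also have "\<dots> = a*(x+1)*((2*x)/((x+1)*(x+1)))" by (simp only: e)
  also have "\<dots> = 2*a*x*((x+1)/((x+1)*(x+1)))" by (simp add: algebra_simps)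
  also have "(x+1)/((x+1)*(x+1)) = 1/(x+1)" using assms by simp
  finally show ?thesis by simp
qed

lemma fiberB:
  fixes N :: nat
  defines "B \<equiv> (\<lambda>k. (k, N + 1)) ` {1..N} \<union> (\<lambda>k. (N + 1, k)) ` {1..N}"
  assumes t: "t \<in> {1..N}"
  shows "card {x\<in>B. (\<lambda>(i,j). if i = N + 1 then j else i) x = t} = 2"
proof -
  have "{x\<in>B. (\<lambda>(i,j). if i = N + 1 then j else i) x = t} = {(t, N + 1), (N + 1, t)}"
    using t unfolding B_def by auto
  moreover have "(t, N + 1) \<noteq> (N + 1, t)" using t by auto
  ultimately show ?thesis by simp
qed

lemma main_eq:
  fixes N :: nat and \<alpha> \<beta> :: real and Is :: "nat list list"
  assumes N1: "N \<ge> 1" and a0: "\<alpha> \<ge> 0" and IsN: "\<forall>I\<in>set Is. set I \<subseteq> {1..N}"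
  shows "qexp N (alpha_tilde N \<alpha> * real N) (2 * alpha_tilde N \<alpha>)
               (\<lambda>es ks. \<Prod>I\<leftarrow>Is. gibbs N \<beta> es ks (mono I))
       = qexp (N + 1) (\<alpha> * real (N + 1)) 0
               (\<lambda>es ks. \<Prod>I\<leftarrow>Is. gibbs (N + 1) \<beta> es ks
                    (\<lambda>\<sigma>. mono I \<sigma> * \<sigma> (N + 1) ^ length I))"
proof -
  define \<Phi> where "\<Phi> = PhiF N \<beta> Is"
  define f where "f = (\<lambda>k::nat. (k, N + 1))"
  define hh where "hh = (\<lambda>(i::nat,j::nat). if i = N + 1 then j else i)"
  define K where "K = {1..N}"
  define A where "A = K \<times> K"
  define S where "S = {1..N + 1} \<times> {1..N + 1}"
  define B where "B = (\<lambda>k. (k, N + 1)) ` K \<union> (\<lambda>k. (N + 1, k)) ` K"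
  define C where "C = {(N + 1, N + 1)}"
  define L where "L = \<alpha> * real (N + 1)"
  have L0: "L \<ge> 0" using a0 by (simp add: L_def)
  have finK: "finite K" and finA: "finite A" and finB: "finite B" and finC: "finite C" and finS: "finite S"
    by (simp_all add: K_def A_def B_def C_def S_def)
  have neK: "K \<noteq> {}" and neA: "A \<noteq> {}" and neB: "B \<noteq> {}" and neC: "C \<noteq> {}"
    using N1 by (auto simp: K_def A_def B_def C_def)
  have SABC: "S = A \<union> (B \<union> C)"
    unfolding S_def A_def B_def C_def K_def by (auto simp: image_iff)
  have dA: "A \<inter> (B \<union> C) = {}" unfolding A_def B_def C_def K_def by auto
  have dB: "B \<inter> C = {}" unfolding B_def C_def K_def by auto
  have hhB: "hh ` B \<subseteq> K" unfolding hh_def B_def by auto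
  have fibB: "\<And>t. t \<in> K \<Longrightarrow> card {x\<in>B. hh x = t} = 2"
    unfolding hh_def B_def K_def by (rule fiberB)
  have cA: "card A = N * N" by (simp add: A_def K_def)
  have cS: "card S = (N + 1) * (N + 1)" by (simp add: S_def)
  have cB: "card B = 2 * N" using fiber_card[OF finB finK hhB fibB] by (simp add: K_def)
  have cC: "card C = 1" by (simp add: C_def)
  have cBC: "card (B \<union> C) = 2 * N + 1" using card_Un_disjoint[OF finB finC dB] cB cC by simp
  define L1 where "L1 = L * (real (card A) / real (card (A \<union> (B \<union> C))))"
  define L2 where "L2 = L * (real (card (B \<union> C)) / real (card (A \<union> (B \<union> C))))"
  define L21 where "L21 = L2 * (real (card B) / real (card (B \<union> C)))"
  define L22 where "L22 = L2 * (real (card C) / real (card (B \<union> C)))"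
  have L1v: "L1 = alpha_tilde N \<alpha> * real N"
  proof -
    have p: "real N + 1 > 0" by simp
    show ?thesis unfolding L1_def L_def alpha_tilde_def SABC[symmetric] cA cS
      by (simp only: of_nat_mult of_nat_add of_nat_1 rate1[OF p])
  qed
  have L21v: "L21 = 2 * alpha_tilde N \<alpha>"
  proof -
    have p: "real N > 0" using N1 by simp
    show ?thesis unfolding L21_def L2_def L_def alpha_tilde_def SABC[symmetric] cBC cB cS
      by (simp only: of_nat_mult of_nat_add of_nat_1 of_nat_numeral rate2[OF p])
  qed
  have L2_0: "L2 \<ge> 0" using L0 by (simp add: L2_def)
  have L21_0: "L21 \<ge> 0" using L2_0 by (simp add: L21_def)
  have Phi_inv: "\<And>xs ys. mset xs = mset ys \<Longrightarrow> \<Phi> xs = \<Phi> ys" unfolding \<Phi>_def by (rule Phi_mset)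
  have Phi_bd: "\<And>xs. \<bar>\<Phi> xs\<bar> \<le> 1" unfolding \<Phi>_def by (rule Phi_bound)
  have R1: "qexp (N + 1) (\<alpha> * real (N + 1)) 0
               (\<lambda>es ks. \<Prod>I\<leftarrow>Is. gibbs (N + 1) \<beta> es ks (\<lambda>\<sigma>. mono I \<sigma> * \<sigma> (N + 1) ^ length I))
       = (\<Sum>p. poi L p * unif_avg S p \<Phi>)"
  proof -
    define H where "H = (\<lambda>es ks. \<Prod>I\<leftarrow>Is. gibbs (N + 1) \<beta> es ks (\<lambda>\<sigma>. mono I \<sigma> * \<sigma> (N + 1) ^ length I))"
    have poi00: "poi 0 q = (if q = 0 then 1 else 0)" for q by (simp add: poi_def)
    have "(\<Sum>q. poi L p * poi 0 q * unif_avg S p (\<lambda>es. unif_avg {1..N + 1} q (\<lambda>ks. H es ks))) = poi L p * unif_avg S p \<Phi>" for p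
    proof -
      have "(\<Sum>q. poi L p * poi 0 q * unif_avg S p (\<lambda>es. unif_avg {1..N + 1} q (\<lambda>ks. H es ks)))
          = (\<Sum>q\<in>{0}. poi L p * poi 0 q * unif_avg S p (\<lambda>es. unif_avg {1..N + 1} q (\<lambda>ks. H es ks)))"
        by (rule suminf_finite) (simp_all add: poi00)
      also have "\<dots> = poi L p * unif_avg S p (\<lambda>es. H es [])" by (simp add: poi00 unif_avg_0)
      also have "unif_avg S p (\<lambda>es. H es []) = unif_avg S p \<Phi>"
      proof (rule unif_avg_cong)
        fix xs assume "set xs \<subseteq> S" "length xs = p"
        then show "H xs [] = \<Phi> xs" unfolding H_def \<Phi>_def S_def by (intro Phi_gauge[OF _ IsN])
      qed
      finally show ?thesis .
    qed
    then show ?thesis unfolding qexp_def L_def[symmetric] S_def[symmetric] H_def by simp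
  qed
  also have R2: "\<dots> = (\<Sum>a. \<Sum>m. poi L1 a * poi L2 m * unif_avg A a (\<lambda>ys. unif_avg (B \<union> C) m (\<lambda>zs. \<Phi> (ys @ zs))))"
    unfolding SABC L1_def L2_def by (rule thin[OF finA _ dA neA _ Phi_inv Phi_bd L0]) (use finB finC neB in auto)
  also have R3: "\<dots> = (\<Sum>a. poi L1 a * unif_avg A a (\<lambda>ys. \<Sum>m. poi L2 m * unif_avg (B \<union> C) m (\<lambda>zs. \<Phi> (ys @ zs))))"
  proof -
    have sumX: "summable (\<lambda>m. poi L2 m * unif_avg (B \<union> C) m (\<lambda>zs. \<Phi> (ys @ zs)))" for ys
      by (rule summable_poi_bd[OF L2_0, where B=1], rule avg_bound) (use finB finC Phi_bd in auto)
    show ?thesis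
      by (rule arg_cong[where f=suminf], rule ext,
          rule avg_suminf[OF finA, where w="poi L2" and X="\<lambda>ys m. unif_avg (B \<union> C) m (\<lambda>zs. \<Phi> (ys @ zs))", OF sumX])
  qed
  also have R4: "\<dots> = (\<Sum>a. poi L1 a * unif_avg A a (\<lambda>ys. \<Sum>b. poi L21 b * unif_avg K b (\<lambda>ks. \<Phi> (ys @ map f ks))))"
  proof -
    have inner: "(\<Sum>m. poi L2 m * unif_avg (B \<union> C) m (\<lambda>zs. \<Phi> (ys @ zs)))
               = (\<Sum>b. poi L21 b * unif_avg K b (\<lambda>ks. \<Phi> (ys @ map f ks)))" for ys
    proof -
      define \<Psi> where "\<Psi> = (\<lambda>l. \<Phi> (ys @ l))"
      have \<Psi>inv: "\<And>xs zs. mset xs = mset zs \<Longrightarrow> \<Psi> xs = \<Psi> zs"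
        unfolding \<Psi>_def by (rule Phi_inv) simp
      have \<Psi>bd: "\<And>xs. \<bar>\<Psi> xs\<bar> \<le> 1" unfolding \<Psi>_def by (rule Phi_bd)
      have "(\<Sum>m. poi L2 m * unif_avg (B \<union> C) m \<Psi>)
          = (\<Sum>b. \<Sum>c. poi L21 b * poi L22 c * unif_avg B b (\<lambda>zs. unif_avg C c (\<lambda>ws. \<Psi> (zs @ ws))))"
        unfolding L21_def L22_def by (rule thin[OF finB finC dB neB neC \<Psi>inv \<Psi>bd L2_0])
      also have "\<dots> = (\<Sum>b. \<Sum>c. poi L21 b * poi L22 c * unif_avg B b \<Psi>)"
      proof -
        have "unif_avg C c (\<lambda>ws. \<Psi> (zs @ ws)) = \<Psi> zs" for c zs
        proof -
          have "unif_avg C c (\<lambda>ws. \<Psi> (zs @ ws)) = unif_avg C c (\<lambda>_. \<Psi> zs)"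
            by (rule unif_avg_cong) (simp add: \<Psi>_def \<Phi>_def C_def Phi_loops[simplified, of _ N _ _ "ys @ zs", simplified])
          also have "\<dots> = \<Psi> zs" by (rule unif_avg_const[OF finC neC])
          finally show ?thesis .
        qed
        then show ?thesis by simp
      qed
      also have "\<dots> = (\<Sum>b. poi L21 b * unif_avg B b \<Psi>)"
      proof -
        have "(\<Sum>c. poi L21 b * poi L22 c * unif_avg B b \<Psi>) = poi L21 b * unif_avg B b \<Psi>" for b
        proof -
          have "(\<lambda>c. poi L21 b * poi L22 c * unif_avg B b \<Psi>) = (\<lambda>c. (poi L21 b * unif_avg B b \<Psi>) * poi L22 c)"
            by (simp add: mult_ac)
          then show ?thesis by (simp add: suminf_mult[OF poi_summable] poi_suminf)
        qed
        then show ?thesis by simp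
      qed
      also have "\<dots> = (\<Sum>b. poi L21 b * unif_avg K b (\<lambda>ks. \<Psi> (map f ks)))"
      proof -
        have "unif_avg B b \<Psi> = unif_avg K b (\<lambda>ks. \<Psi> (map f ks))" for b
        proof -
          have "unif_avg B b \<Psi> = unif_avg B b (\<lambda>zs. \<Psi> (map f (map hh zs)))"
          proof (rule unif_avg_cong)
            fix zs assume zs: "set zs \<subseteq> B"
            have "\<And>i j. (i, j) \<in> set zs \<Longrightarrow> i = N + 1 \<or> j = N + 1" using zs unfolding B_def by auto
            then show "\<Psi> zs = \<Psi> (map f (map hh zs))"
              unfolding \<Psi>_def \<Phi>_def f_def hh_def by (rule Phi_swap)
          qed
          also have "\<dots> = unif_avg K b (\<lambda>ks. \<Psi> (map f ks))"
            by (rule fiber_avg[OF finB finK hhB fibB]) auto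
          finally show ?thesis .
        qed
        then show ?thesis by simp
      qed
      finally show ?thesis unfolding \<Psi>_def .
    qed
    show ?thesis by (simp only: inner)
  qed
  also have R5: "\<dots> = (\<Sum>a. \<Sum>b. poi L1 a * poi L21 b * unif_avg A a (\<lambda>ys. unif_avg K b (\<lambda>ks. \<Phi> (ys @ map f ks))))"
  proof -
    have sumY: "summable (\<lambda>b. poi L21 b * unif_avg K b (\<lambda>ks. \<Phi> (ys @ map f ks)))" for ys
      by (rule summable_poi_bd[OF L21_0, where B=1], rule avg_bound) (use finK Phi_bd in auto)
    show ?thesis
      by (rule arg_cong[where f=suminf], rule ext,
          rule avg_suminf[OF finA, where w="poi L21" and X="\<lambda>ys b. unif_avg K b (\<lambda>ks. \<Phi> (ys @ map f ks))", OF sumY, symmetric])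
  qed
  also have R6: "\<dots> = qexp N (alpha_tilde N \<alpha> * real N) (2 * alpha_tilde N \<alpha>)
               (\<lambda>es ks. \<Prod>I\<leftarrow>Is. gibbs N \<beta> es ks (mono I))"
    unfolding qexp_def L1v[symmetric] L21v[symmetric] A_def K_def \<Phi>_def f_def Phi_fields ..
  finally show ?thesis by simp
qed


theorem theorem2:
  fixes \<alpha> \<beta> t :: real and ns :: "nat list"
  assumes "\<alpha> > 0" and "t = 1" and "\<forall>n\<in>set ns. n \<ge> 1"
  shows "\<exists>C. \<forall>N\<ge>1. \<forall>Is :: nat list list.
           map length Is = ns \<and> (\<forall>I\<in>set Is. set I \<subseteq> {1..N}) \<longrightarrow>
           \<bar>qexp N (alpha_tilde N \<alpha> * real N) (2 * alpha_tilde N \<alpha> * t)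
               (\<lambda>es ks. \<Prod>I\<leftarrow>Is. gibbs N \<beta> es ks (mono I))
            - qexp (N + 1) (\<alpha> * real (N + 1)) 0
               (\<lambda>es ks. \<Prod>I\<leftarrow>Is. gibbs (N + 1) \<beta> es ks
                    (\<lambda>\<sigma>. mono I \<sigma> * \<sigma> (N + 1) ^ length I))\<bar>
           \<le> C / real N"
proof (rule exI[where x=0], intro allI impI)
  fix N :: nat and Is :: "nat list list"
  assume N1: "N \<ge> 1" and h: "map length Is = ns \<and> (\<forall>I\<in>set Is. set I \<subseteq> {1..N})"
  have a0: "\<alpha> \<ge> 0" using assms(1) by simp
  have "qexp N (alpha_tilde N \<alpha> * real N) (2 * alpha_tilde N \<alpha> * t)
               (\<lambda>es ks. \<Prod>I\<leftarrow>Is. gibbs N \<beta> es ks (mono I))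
       = qexp (N + 1) (\<alpha> * real (N + 1)) 0
               (\<lambda>es ks. \<Prod>I\<leftarrow>Is. gibbs (N + 1) \<beta> es ks
                    (\<lambda>\<sigma>. mono I \<sigma> * \<sigma> (N + 1) ^ length I))"
    using main_eq[OF N1 a0, of Is \<beta>] h assms(2) by simp
  then show "\<bar>qexp N (alpha_tilde N \<alpha> * real N) (2 * alpha_tilde N \<alpha> * t)
               (\<lambda>es ks. \<Prod>I\<leftarrow>Is. gibbs N \<beta> es ks (mono I))
            - qexp (N + 1) (\<alpha> * real (N + 1)) 0
               (\<lambda>es ks. \<Prod>I\<leftarrow>Is. gibbs (N + 1) \<beta> es ks
                    (\<lambda>\<sigma>. mono I \<sigma> * \<sigma> (N + 1) ^ length I))\<bar>
           \<le> 0 / real N" by simp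
qed

end
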